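(* Let $\alpha=\{a_k\}_{k\ge1}$ be a sequence of positive numbers with $a_k\to\infty$ and $x_\alpha=1$, and let $j\ge2$. If there is $N_0$ such that $$\int_0^1 L(x;\alpha;j)\,F_{N_0}(x;\alpha)\,|\ln x|^{j-1}\frac{dx}{x}<\infty,$$ then $\lim_{N\to\infty}E[U_j^N]=I(\alpha;j)<\infty$.
   Context: For $N\ge2$, coupon type $k\in\{1,\dots,N\}$ has probability $a_k/\sum_{i=1}^Na_i$; $U_j^N$ is the number of empty album places of the $j$-th collector when the first collector completes her set (each collector passes duplicates to the next one), with $$E[U_j^N]=\sum_{k=1}^N\int_0^\infty a_k e^{-a_k t}\frac{(a_kt)^{j-1}}{(j-1)!}\prod_{i\ne k,\,1\le i\le N}\big(1-e^{-a_i t}\big)\,dt.$$ $x_\alpha:=\inf\{x\in[0,1]:\sum_{k}x^{a_k}=\infty\}$. For $x\in(0,x_\alpha)$: $L(x;\alpha;j):=\sum_{k=1}^\infty a_k^j\frac{x^{a_k}}{1-x^{a_k}}$, $F(x;\alpha):=\prod_{k=1}^\infty(1-x^{a_k})$; $F_{N}(x;\alpha):=\prod_{k=1}^{N}(1-x^{a_k})$; and $I(\alpha;j):=\frac{1}{(j-1)!}\int_0^{x_\alpha}L(x;\alpha;j)F(x;\alpha)|\ln x|^{j-1}\frac{dx}{x}$. *)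

theory Defs
  imports "HOL-Analysis.Analysis"
begin

(* The sequence alpha = (a_k)_{k>=1} is a function a :: nat => real; a 0 is ignored. *)

definition x_alpha :: "(nat \<Rightarrow> real) \<Rightarrow> real" where
  "x_alpha a = Inf {x \<in> {0..1}. \<not> summable (\<lambda>k. x powr a (Suc k))}"

definition L_fun :: "(nat \<Rightarrow> real) \<Rightarrow> nat \<Rightarrow> real \<Rightarrow> real" where
  "L_fun a j x = (\<Sum>k. a (Suc k) ^ j * x powr a (Suc k) / (1 - x powr a (Suc k)))"

definition F_fun :: "(nat \<Rightarrow> real) \<Rightarrow> real \<Rightarrow> real" where
  "F_fun a x = (\<Prod>k. 1 - x powr a (Suc k))"

definition F_N :: "(nat \<Rightarrow> real) \<Rightarrow> nat \<Rightarrow> real \<Rightarrow> real" where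
  "F_N a N x = (\<Prod>k\<in>{1..N}. 1 - x powr a k)"

definition I_fun :: "(nat \<Rightarrow> real) \<Rightarrow> nat \<Rightarrow> ennreal" where
  "I_fun a j = (\<integral>\<^sup>+ x \<in> {0<..<x_alpha a}.
      ennreal (L_fun a j x * F_fun a x * \<bar>ln x\<bar> ^ (j - 1) / x / fact (j - 1)) \<partial>lborel)"

definition EU :: "(nat \<Rightarrow> real) \<Rightarrow> nat \<Rightarrow> nat \<Rightarrow> ennreal" where
  "EU a j N = (\<Sum>k\<in>{1..N}. \<integral>\<^sup>+ t \<in> {0..}.
      ennreal (a k * exp (- a k * t) * (a k * t) ^ (j - 1) / fact (j - 1)
               * (\<Prod>i\<in>{1..N} - {k}. 1 - exp (- a i * t))) \<partial>lborel)"

end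

theory Submission imports Defs "HOL-Real_Asymp.Real_Asymp" "HOL-Analysis.Lebesgue_Integral_Substitution" begin

lemma subst_exp:
  fixes h :: "real \<Rightarrow> real"
  assumes [measurable]: "h \<in> borel_measurable borel"
  shows "(\<integral>\<^sup>+t\<in>{0..}. ennreal (h (exp (-t))) \<partial>lborel) = (\<integral>\<^sup>+x\<in>{0<..<1}. ennreal (h x / x) \<partial>lborel)"
proof -
  have step: "(\<integral>\<^sup>+x. ennreal (h x / x) * indicator {exp (- real n)..1} x \<partial>lborel) = (\<integral>\<^sup>+t. ennreal (h (exp (-t))) * indicator {0..real n} t \<partial>lborel)" for n::nat
  proof -
    have "(\<integral>\<^sup>+x. ennreal (h x / x) * indicator {exp (- real n)..1} x \<partial>lborel) = (\<integral>\<^sup>+x. ennreal ((\<lambda>x. h x / x) x * indicator {exp (- real n)..exp 0} x) \<partial>lborel)"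
      by (simp add: nn_integral_set_ennreal)
    also have "\<dots> = (\<integral>\<^sup>+y. ennreal (h (exp y) / exp y * exp y * indicator {- real n..0} y) \<partial>lborel)"
      by (rule nn_integral_substitution[where g=exp and g'=exp])
         (auto intro!: continuous_intros derivative_eq_intros simp: set_borel_measurable_def)
    also have "\<dots> = (\<integral>\<^sup>+y. ennreal (h (exp y)) * indicator {- real n..0} y \<partial>lborel)"
      by (simp add: nn_integral_set_ennreal)
    also have "\<dots> = (\<integral>\<^sup>+t. ennreal (h (exp (0 + (-1) * t))) * indicator {- real n..0} (0 + (-1) * t) \<partial>lborel)"
      using nn_integral_real_affine[of "\<lambda>y. ennreal (h (exp y)) * indicator {- real n..0} y" "-1" 0] by simp
    also have "\<dots> = (\<integral>\<^sup>+t. ennreal (h (exp (-t))) * indicator {0..real n} t \<partial>lborel)"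
      by (intro nn_integral_cong) (auto split: split_indicator)
    finally show ?thesis .
  qed
  have e0: "(\<lambda>n. exp (- real n)) \<longlonglongrightarrow> 0" by real_asymp
  have L1: "(\<lambda>n. \<integral>\<^sup>+x. ennreal (h x / x) * indicator {exp (- real n)..1} x \<partial>lborel) \<longlonglongrightarrow> (\<integral>\<^sup>+x. ennreal (h x / x) * indicator {0<..1} x \<partial>lborel)"
  proof (rule nn_integral_LIMSEQ)
    show "incseq (\<lambda>n x. ennreal (h x / x) * indicator {exp (- real n)..1} x)"
    proof (intro monoI le_funI)
      fix m n :: nat and x assume "m \<le> n"
      then have "exp (- real n) \<le> exp (- real m)" by simp
      then have "exp (- real m) \<le> x \<Longrightarrow> exp (- real n) \<le> x" by linarith
      then show "ennreal (h x / x) * indicator {exp (- real m)..1} x \<le> ennreal (h x / x) * indicator {exp (- real n)..1} x"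
        by (auto split: split_indicator)
    qed
    show "(\<lambda>n. ennreal (h x / x) * indicator {exp (- real n)..1} x) \<longlonglongrightarrow> ennreal (h x / x) * indicator {0<..1} x" for x
    proof (cases "0 < x")
      case True
      then have "eventually (\<lambda>n. exp (- real n) < x) sequentially" using order_tendstoD(2)[OF e0] by blast
      then have "eventually (\<lambda>n. ennreal (h x / x) * indicator {exp (- real n)..1} x = ennreal (h x / x) * indicator {0<..1} x) sequentially"
        by eventually_elim (use True in \<open>auto split: split_indicator\<close>)
      then show ?thesis by (rule tendsto_eventually)
    next
      case False
      then have "\<And>n. x < exp (- real n)" by (meson exp_gt_zero less_le_trans not_le)
      then have "\<And>n. indicator {exp (- real n)..1} x = (0::ennreal)" by (meson atLeastAtMost_iff indicator_simps(2) not_le)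
      with False show ?thesis by (simp add: indicator_def)
    qed
  qed auto
  have L2: "(\<lambda>n. \<integral>\<^sup>+t. ennreal (h (exp (-t))) * indicator {0..real n} t \<partial>lborel) \<longlonglongrightarrow> (\<integral>\<^sup>+t. ennreal (h (exp (-t))) * indicator {0..} t \<partial>lborel)"
  proof (rule nn_integral_LIMSEQ)
    show "incseq (\<lambda>n t. ennreal (h (exp (-t))) * indicator {0..real n} t)"
      by (auto simp: incseq_def le_fun_def intro!: mult_left_mono split: split_indicator)
    show "(\<lambda>n. ennreal (h (exp (-t))) * indicator {0..real n} t) \<longlonglongrightarrow> ennreal (h (exp (-t))) * indicator {0..} t" for t
    proof -
      have "eventually (\<lambda>n. t \<le> real n) sequentially"
        using filterlim_real_sequentially unfolding filterlim_at_top by blast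
      then have "eventually (\<lambda>n. ennreal (h (exp (-t))) * indicator {0..real n} t = ennreal (h (exp (-t))) * indicator {0..} t) sequentially"
        by eventually_elim (auto split: split_indicator)
      then show ?thesis by (rule tendsto_eventually)
    qed
  qed auto
  have "(\<integral>\<^sup>+x. ennreal (h x / x) * indicator {0<..1} x \<partial>lborel) = (\<integral>\<^sup>+t. ennreal (h (exp (-t))) * indicator {0..} t \<partial>lborel)"
    using LIMSEQ_unique[OF L1 L2[folded step]] .
  moreover have "(\<integral>\<^sup>+x. ennreal (h x / x) * indicator {0<..1} x \<partial>lborel) = (\<integral>\<^sup>+x. ennreal (h x / x) * indicator {0<..<1} x \<partial>lborel)"
    by (intro nn_integral_cong_AE) (use AE_lborel_singleton[of 1] in \<open>eventually_elim, auto split: split_indicator\<close>)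
  ultimately show ?thesis by simp
qed

lemma summ_pow:
  fixes a :: "nat \<Rightarrow> real"
  assumes xa: "x_alpha a = 1" and x: "0 \<le> x" "x < 1"
  shows "summable (\<lambda>k. x powr a (Suc k))"
proof (rule ccontr)
  assume ns: "\<not> summable (\<lambda>k. x powr a (Suc k))"
  then have "x \<in> {x \<in> {0..1}. \<not> summable (\<lambda>k. x powr a (Suc k))}" using x by auto
  then have "Inf {x \<in> {0..1}. \<not> summable (\<lambda>k. x powr a (Suc k))} \<le> x"
    by (intro cInf_lower) (auto intro: bdd_belowI[where m=0])
  with xa x show False unfolding x_alpha_def by simp
qed

lemma frac_bound:
  fixes A B :: real
  assumes "0 \<le> A" "A \<le> 1" "0 \<le> B" "B \<le> 1/2"
  shows "A * B / (1 - B * B) \<le> 2 * B"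
proof -
  have "B * B \<le> (1/2) * (1/2)" using assms by (intro mult_mono) auto
  then have d: "1 - B * B \<ge> 1/2" by simp
  have "A * B \<le> 1 * 1" using assms by (intro mult_mono) auto
  have "A * B \<le> 1 * B" using assms by (intro mult_right_mono) auto
  then have "A * B \<le> B" by simp
  then have "A * B / (1 - B * B) \<le> B / (1/2)"
    using d assms by (intro frac_le) (auto intro: mult_nonneg_nonneg)
  then show ?thesis by simp
qed

lemma summ_L:
  fixes a :: "nat \<Rightarrow> real"
  assumes pos: "\<And>k. k \<ge> 1 \<Longrightarrow> a k > 0"
    and lim: "filterlim a at_top sequentially"
    and xa: "x_alpha a = 1" and x: "0 < x" "x < 1"
  shows "summable (\<lambda>k. a (Suc k) ^ j * x powr a (Suc k) / (1 - x powr a (Suc k)))"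
proof -
  define y where "y = sqrt x"
  have y: "0 < y" "y < 1" using x by (auto simp: y_def)
  have xy: "x = y * y" using x by (simp add: y_def)
  have as: "filterlim (\<lambda>k. a (Suc k)) at_top sequentially"
    using lim filterlim_sequentially_Suc by blast
  have g1: "((\<lambda>t. t ^ j * y powr t) \<longlongrightarrow> 0) at_top" using y by real_asymp
  have g2: "((\<lambda>t. y powr t) \<longlongrightarrow> 0) at_top" using y by real_asymp
  have e1: "eventually (\<lambda>k. a (Suc k) ^ j * y powr a (Suc k) < 1) sequentially"
    using order_tendstoD(2)[OF filterlim_compose[OF g1 as]] by simp
  have e2: "eventually (\<lambda>k. y powr a (Suc k) < 1/2) sequentially"
    using order_tendstoD(2)[OF filterlim_compose[OF g2 as], of "1/2"] by (simp add: o_def)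
  have "eventually (\<lambda>k. norm (a (Suc k) ^ j * x powr a (Suc k) / (1 - x powr a (Suc k))) \<le> 2 * y powr a (Suc k)) sequentially"
    using e1 e2
  proof eventually_elim
    case (elim k)
    define A where "A = a (Suc k) ^ j * y powr a (Suc k)"
    define B where "B = y powr a (Suc k)"
    have ap: "a (Suc k) > 0" using pos by simp
    have A: "0 \<le> A" "A \<le> 1" using elim ap by (auto simp: A_def)
    have B: "0 \<le> B" "B \<le> 1/2" using elim by (auto simp: B_def)
    have "x powr a (Suc k) = B * B" by (simp add: xy powr_mult B_def)
    then have eq: "a (Suc k) ^ j * x powr a (Suc k) / (1 - x powr a (Suc k)) = A * B / (1 - B * B)"
      by (simp add: A_def B_def mult.assoc)
    have "B * B \<le> (1/2) * (1/2)" using B by (intro mult_mono) auto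
    then have nn: "0 \<le> A * B / (1 - B * B)" using A B by (auto intro!: divide_nonneg_pos)
    have "norm (A * B / (1 - B * B)) \<le> 2 * B" using frac_bound[OF A B] nn by (simp only: real_norm_def abs_of_nonneg)
    then show ?case unfolding eq by (simp only: B_def)
  qed
  moreover have "summable (\<lambda>k. 2 * y powr a (Suc k))"
    using summ_pow[OF xa, of y] y by (intro summable_mult) auto
  ultimately show ?thesis by (rule summable_comparison_test_ev)
qed

lemma F_lim:
  fixes a :: "nat \<Rightarrow> real"
  assumes xa: "x_alpha a = 1" and x: "0 \<le> x" "x < 1"
  shows "(\<lambda>N. F_N a N x) \<longlonglongrightarrow> F_fun a x"
proof -
  have "summable (\<lambda>k. norm (1 - x powr a (Suc k) - 1))"
    using summ_pow[OF xa x] by simp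
  then have cp: "convergent_prod (\<lambda>k. 1 - x powr a (Suc k))"
    by (intro abs_convergent_prod_imp_convergent_prod summable_imp_abs_convergent_prod)
  have "(\<lambda>n. \<Prod>i\<le>n. 1 - x powr a (Suc i)) \<longlonglongrightarrow> F_fun a x"
    unfolding F_fun_def by (rule convergent_prod_LIMSEQ[OF cp])
  moreover have "F_N a (Suc n) x = (\<Prod>i\<le>n. 1 - x powr a (Suc i))" for n
    by (simp only: F_N_def prod.atLeast1_atMost_eq lessThan_Suc_atMost One_nat_def)
  ultimately have "(\<lambda>n. F_N a (Suc n) x) \<longlonglongrightarrow> F_fun a x" by simp
  then show ?thesis using filterlim_sequentially_Suc by blast
qed


lemma alg: fixes A B C c p q f P x :: real
  assumes "q \<noteq> 0" "A * B = C * c"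
  shows "A * p * B / f * P / x = C * p / q * (q * P * c / x / f)"
proof -
  have "A * p * B / f * P / x = (A * B) * p * P / x / f" by (simp add: field_simps)
  also have "\<dots> = C * c * p * P / x / f" using assms by simp
  also have "\<dots> = C * p / q * (q * P * c / x / f)" using assms by (simp add: field_simps)
  finally show ?thesis .
qed

lemma F_nonneg:
  fixes a :: "nat \<Rightarrow> real"
  assumes "0 \<le> x" "x \<le> 1" "\<And>k. k \<ge> 1 \<Longrightarrow> a k > 0"
  shows "0 \<le> F_N a N x"
  unfolding F_N_def using assms powr_mono2[of _ x 1] by (intro prod_nonneg) (smt (verit) atLeastAtMost_iff powr_one_eq_one)

lemma F_mono:
  fixes a :: "nat \<Rightarrow> real"
  assumes "0 \<le> x" "x \<le> 1" "\<And>k. k \<ge> 1 \<Longrightarrow> a k > 0" "N0 \<le> N"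
  shows "F_N a N x \<le> F_N a N0 x"
  using assms(4)
proof (induction N rule: dec_induct)
  case base then show ?case by simp
next
  case (step n)
  have "F_N a (Suc n) x = F_N a n x * (1 - x powr a (Suc n))"
    unfolding F_N_def by (simp add: prod.cl_ivl_Suc)
  also have "\<dots> \<le> F_N a n x * 1"
    using F_nonneg[OF assms(1-3)] assms by (intro mult_left_mono) auto
  finally show ?case using step by simp
qed


theorem proposition3:
  fixes a :: "nat \<Rightarrow> real" and j :: nat
  assumes pos: "\<And>k. k \<ge> 1 \<Longrightarrow> a k > 0"
    and lim: "filterlim a at_top sequentially"
    and xa: "x_alpha a = 1"
    and j: "j \<ge> 2"
    and hyp: "\<exists>N0. (\<integral>\<^sup>+ x \<in> {0<..<1}.
        ennreal (L_fun a j x * F_N a N0 x * \<bar>ln x\<bar> ^ (j - 1) / x) \<partial>lborel) < \<infinity>"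
  shows "(\<lambda>N. EU a j N) \<longlonglongrightarrow> I_fun a j \<and> I_fun a j < \<infinity>"
proof -
  obtain N0 where hypN0: "(\<integral>\<^sup>+ x \<in> {0<..<1}.
        ennreal (L_fun a j x * F_N a N0 x * \<bar>ln x\<bar> ^ (j - 1) / x) \<partial>lborel) < \<infinity>"
    using hyp by blast
  define LN where "LN N x = (\<Sum>k\<in>{1..N}. a k ^ j * x powr a k / (1 - x powr a k))" for N x
  define G where "G N x = LN N x * F_N a N x * \<bar>ln x\<bar> ^ (j - 1) / x / fact (j - 1)" for N x
  have LN_alt: "LN N x = (\<Sum>i<N. a (Suc i) ^ j * x powr a (Suc i) / (1 - x powr a (Suc i)))" for N x
    by (simp only: LN_def sum.atLeast1_atMost_eq One_nat_def)
  have p1: "x powr a k < 1" if "0 < x" "x < 1" "k \<ge> 1" for x k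
    using powr_less_mono2[OF pos[OF that(3)], of x 1] that by simp
  have termnn: "0 \<le> a k ^ j * x powr a k / (1 - x powr a k)" if "0 < x" "x < 1" "k \<ge> 1" for x k
    using p1[OF that] pos[OF that(3)] by (auto intro!: divide_nonneg_pos)
  have LN_nn: "0 \<le> LN N x" if "0 < x" "x < 1" for N x
    unfolding LN_def using termnn that by (intro sum_nonneg) auto
  have LN_le: "LN N x \<le> L_fun a j x" if "0 < x" "x < 1" for N x
    unfolding LN_alt L_fun_def
    by (rule sum_le_suminf[OF summ_L[OF pos lim xa that]]) (use termnn that in auto)
  have LN_lim: "(\<lambda>N. LN N x) \<longlonglongrightarrow> L_fun a j x" if "0 < x" "x < 1" for x
    unfolding LN_alt L_fun_def by (rule summable_LIMSEQ[OF summ_L[OF pos lim xa that]])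
  have G_lim: "(\<lambda>N. G N x) \<longlonglongrightarrow> L_fun a j x * F_fun a x * \<bar>ln x\<bar> ^ (j - 1) / x / fact (j - 1)"
    if "0 < x" "x < 1" for x
    unfolding G_def using LN_lim[OF that] F_lim[OF xa, of x] that
    by (intro tendsto_intros) auto

  have EUeq: "EU a j N = (\<integral>\<^sup>+x\<in>{0<..<1}. ennreal (G N x) \<partial>lborel)" for N
  proof -
    define h where "h k x = a k * x powr a k * (a k * (- ln x)) ^ (j - 1) / fact (j - 1)
      * (\<Prod>i\<in>{1..N} - {k}. 1 - x powr a i)" for k x
    have hm: "h k \<in> borel_measurable borel" for k unfolding h_def by measurable
    have "EU a j N = (\<Sum>k\<in>{1..N}. \<integral>\<^sup>+t\<in>{0..}. ennreal (h k (exp (-t))) \<partial>lborel)"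
      unfolding EU_def by (intro sum.cong refl nn_integral_cong) (simp add: h_def powr_def)
    also have "\<dots> = (\<Sum>k\<in>{1..N}. \<integral>\<^sup>+x\<in>{0<..<1}. ennreal (h k x / x) \<partial>lborel)"
      by (intro sum.cong refl subst_exp hm)
    also have "\<dots> = (\<integral>\<^sup>+x. (\<Sum>k\<in>{1..N}. ennreal (h k x / x) * indicator {0<..<1} x) \<partial>lborel)"
      by (rule nn_integral_sum[symmetric]) (use hm in measurable)
    also have "\<dots> = (\<integral>\<^sup>+x\<in>{0<..<1}. ennreal (G N x) \<partial>lborel)"
    proof (intro nn_integral_cong)
      fix x
      show "(\<Sum>k\<in>{1..N}. ennreal (h k x / x) * indicator {0<..<1} x) = ennreal (G N x) * indicator {0<..<1} x"
      proof (cases "x \<in> {0<..<1}")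
        case False then show ?thesis by simp
      next
        case True
        then have x: "0 < x" "x < 1" by auto
        have l: "\<bar>ln x\<bar> = - ln x" using x by simp
        have hk: "h k x / x = a k ^ j * x powr a k / (1 - x powr a k) * (F_N a N x * \<bar>ln x\<bar> ^ (j - 1) / x / fact (j - 1))"
          if k: "k \<in> {1..N}" for k
        proof -
          have ak: "a k > 0" using pos k by auto
          have pk: "x powr a k < 1" using p1[OF x] k by auto
          have F: "F_N a N x = (1 - x powr a k) * (\<Prod>i\<in>{1..N}-{k}. 1 - x powr a i)"
            unfolding F_N_def using k by (simp add: prod.remove)
          have jj: "a k * (a k * (- ln x)) ^ (j - 1) = a k ^ j * (- ln x) ^ (j - 1)"
          proof -
            obtain m where m: "j = Suc m" using j by (cases j) auto
            show ?thesis by (simp only: m diff_Suc_1 power_Suc power_mult_distrib mult.assoc)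
          qed
          show ?thesis unfolding h_def F l
            by (rule alg[OF _ jj]) (use pk in simp)
        qed
        have hnn: "0 \<le> h k x / x" if k: "k \<in> {1..N}" for k
        proof -
          have t: "0 \<le> a k ^ j * x powr a k / (1 - x powr a k)" using termnn[OF x] k by auto
          have r: "0 \<le> F_N a N x * \<bar>ln x\<bar> ^ (j - 1) / x / fact (j - 1)"
            using F_nonneg[of x a N] x pos by auto
          show ?thesis unfolding hk[OF k] using mult_nonneg_nonneg[OF t r] .
        qed
        have "(\<Sum>k\<in>{1..N}. ennreal (h k x / x)) = ennreal (\<Sum>k\<in>{1..N}. h k x / x)"
          using hnn by (rule sum_ennreal)
        also have "(\<Sum>k\<in>{1..N}. h k x / x) = (\<Sum>k\<in>{1..N}. a k ^ j * x powr a k / (1 - x powr a k) * (F_N a N x * \<bar>ln x\<bar> ^ (j - 1) / x / fact (j - 1)))"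
          by (intro sum.cong refl hk)
        also have "\<dots> = LN N x * (F_N a N x * \<bar>ln x\<bar> ^ (j - 1) / x / fact (j - 1))"
          unfolding LN_def by (simp only: sum_distrib_right)
        also have "\<dots> = G N x"
          unfolding G_def by (simp only: times_divide_eq_right mult.assoc)
        finally show ?thesis using True by (simp add: sum_distrib_right[symmetric])
      qed
    qed
    finally show ?thesis .
  qed

  define u where "u i x = ennreal (G (i + N0) x) * indicator {0<..<1} x" for i x
  define u' where "u' x = ennreal (L_fun a j x * F_fun a x * \<bar>ln x\<bar> ^ (j - 1) / x / fact (j - 1)) * indicator {0<..<1} x" for x
  define w where "w x = ennreal (L_fun a j x * F_N a N0 x * \<bar>ln x\<bar> ^ (j - 1) / x) * indicator {0<..<1} x" for x
  define v where "v i x = ennreal (LN i x * F_N a N0 x * \<bar>ln x\<bar> ^ (j - 1) / x) * indicator {0<..<1} x" for i x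
  have um: "u i \<in> borel_measurable lborel" for i
    unfolding u_def G_def LN_def F_N_def by measurable
  have vm: "v i \<in> borel_measurable lborel" for i
    unfolding v_def LN_def F_N_def by measurable
  have ulim: "(\<lambda>i. u i x) \<longlonglongrightarrow> u' x" for x
  proof (cases "x \<in> {0<..<1}")
    case True
    then have "(\<lambda>i. G (i + N0) x) \<longlonglongrightarrow> L_fun a j x * F_fun a x * \<bar>ln x\<bar> ^ (j - 1) / x / fact (j - 1)"
      using LIMSEQ_ignore_initial_segment[OF G_lim] by auto
    then show ?thesis using True unfolding u_def u'_def by (simp add: tendsto_ennrealI)
  next
    case False then show ?thesis unfolding u_def u'_def by simp
  qed
  have vlim: "(\<lambda>i. v i x) \<longlonglongrightarrow> w x" for x
  proof (cases "x \<in> {0<..<1}")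
    case True
    then have "(\<lambda>i. LN i x * F_N a N0 x * \<bar>ln x\<bar> ^ (j - 1) / x) \<longlonglongrightarrow> L_fun a j x * F_N a N0 x * \<bar>ln x\<bar> ^ (j - 1) / x"
      using LN_lim by (intro tendsto_intros) auto
    then show ?thesis using True unfolding v_def w_def by (simp add: tendsto_ennrealI)
  next
    case False then show ?thesis unfolding v_def w_def by simp
  qed
  have u'm: "u' \<in> borel_measurable lborel"
    by (rule borel_measurable_LIMSEQ_order[OF ulim um])
  have wm: "w \<in> borel_measurable lborel"
    by (rule borel_measurable_LIMSEQ_order[OF vlim vm])
  have bound: "u i x \<le> w x" for i x
  proof (cases "x \<in> {0<..<1}")
    case True
    then have x: "0 < x" "x < 1" by auto
    have c: "0 \<le> \<bar>ln x\<bar> ^ (j - 1) / x" using x by auto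
    have f1: "(1::real) \<le> fact (j - 1)" by simp
    have "LN (i + N0) x * F_N a (i + N0) x \<le> L_fun a j x * F_N a N0 x"
      using LN_le[OF x] LN_nn[OF x] F_mono[of x a N0 "i + N0"] F_nonneg[of x a] x pos
      by (intro mult_mono) (auto intro: order_trans[OF LN_nn[OF x] LN_le[OF x]])
    then have "LN (i + N0) x * F_N a (i + N0) x * (\<bar>ln x\<bar> ^ (j - 1) / x) \<le> L_fun a j x * F_N a N0 x * (\<bar>ln x\<bar> ^ (j - 1) / x)"
      using c by (rule mult_right_mono)
    moreover have "0 \<le> LN (i + N0) x * F_N a (i + N0) x * (\<bar>ln x\<bar> ^ (j - 1) / x)"
      using LN_nn[OF x] F_nonneg[of x a] x pos c by (intro mult_nonneg_nonneg) auto
    ultimately have "G (i + N0) x \<le> L_fun a j x * F_N a N0 x * \<bar>ln x\<bar> ^ (j - 1) / x"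
    proof -
      let ?Q = "LN (i + N0) x * F_N a (i + N0) x * (\<bar>ln x\<bar> ^ (j - 1) / x)"
      have "G (i + N0) x = ?Q / fact (j - 1)" unfolding G_def by (simp only: times_divide_eq_right)
      also have "\<dots> \<le> ?Q / 1" using f1 \<open>0 \<le> ?Q\<close> by (intro divide_left_mono) auto
      also have "\<dots> \<le> L_fun a j x * F_N a N0 x * (\<bar>ln x\<bar> ^ (j - 1) / x)" using \<open>?Q \<le> _\<close> by simp
      finally show ?thesis by (simp only: times_divide_eq_right)
    qed
    then show ?thesis using True unfolding u_def w_def by (simp add: ennreal_leI)
  next
    case False then show ?thesis unfolding u_def w_def by simp
  qed
  have wfin: "(\<integral>\<^sup>+x. w x \<partial>lborel) < \<infinity>" using hypN0 unfolding w_def .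
  have conv: "(\<lambda>i. (\<integral>\<^sup>+x. u i x \<partial>lborel)) \<longlonglongrightarrow> (\<integral>\<^sup>+x. u' x \<partial>lborel)"
    by (rule nn_integral_dominated_convergence[OF um u'm wm _ wfin]) (use bound ulim in auto)
  have "(\<lambda>i. EU a j (i + N0)) \<longlonglongrightarrow> I_fun a j"
    using conv unfolding EUeq u_def u'_def I_fun_def xa .
  then have t1: "(\<lambda>N. EU a j N) \<longlonglongrightarrow> I_fun a j" by (rule LIMSEQ_offset)
  have "u' x \<le> w x" for x
    using LIMSEQ_le_const2[OF ulim] bound by blast
  then have "I_fun a j \<le> (\<integral>\<^sup>+x. w x \<partial>lborel)"
    unfolding I_fun_def xa u'_def[symmetric] by (intro nn_integral_mono)
  then have "I_fun a j < \<infinity>" using wfin by (rule le_less_trans)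
  with t1 show ?thesis by blast
qed

end
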